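(* Assume each bus has either no generator or at least two generators, and $x^*_n>0$ for all $n$; let $b^*$ be the unique efficient Nash equilibrium, $b^*_n=2a_nx^*_n+c_n$. Consider an execution of the Bid Adjustment Algorithm with $0<\beta_k<2a_n$ for all $n$ and $k\ge1$. Let $0<r<\|b(1)-b^*\|$ and assume that for all $k\ge1$, $$\alpha\le\beta_k\le B(r):=\frac{1}{2a_{\max}}\Bigl(\frac{1}{2a_{\min}^2}+\frac{16\bar y^2}{r^2}\Bigr)^{-1}$$ for some $\alpha>0$, where $a_{\max}=\max_na_n$, $a_{\min}=\min_na_n$, $\bar y=\sum_iy_i$. Then: (i) there exists $l\ge1$ such that $\|b(l)-b^*\|<r$ and, for all $k\in\{1,\dots,l-1\}$, $\|b(k)-b^*\|\ge r$ and $$\|b(k+1)-b^*\|\le\Bigl(1-\frac{\alpha}{2a_{\max}}\Bigr)^{k/2}\|b(1)-b^*\|;$$ (ii) for all $k\ge l$, $\|b(k)-b^*\|\le\bigl(1+\frac{B(r)}{2a_{\max}}\bigr)^{1/2}r$.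
   Context: Network: directed graph with buses $\{1,\dots,N_b\}$, edge set $\mathcal E$, line flow limits $\bar z_{ij}>0$, $G_i$ the set of generators at bus $i$ (the $G_i$ partition $\{1,\dots,N\}$), loads $y_i\ge0$. Generator $n$ has cost $f_n(x)=a_nx^2+c_nx$, $a_n>0$, $c_n\ge0$. DC-OPF: minimize $\sum_n f_n(x_n)$ over $(x,z)$ s.t. $\sum_{j:(i,j)\in\mathcal E}z_{ij}-\sum_{j:(j,i)\in\mathcal E}z_{ji}=\sum_{n\in G_i}x_n-y_i$ for all $i$, $|z_{ij}|\le\bar z_{ij}$, $x\ge0$; assumed feasible with optimizer $(x^*,z^* )$, $x^*$ unique. S-DC-OPF given bids $b\ge0$: same constraints, objective $\sum_n b_nx_n$. An efficient Nash equilibrium is in particular a bid $b^*$ for which $(x^*,z^* )$ optimizes S-DC-OPF with bids $b^*$ and $x^*_n=\arg\max_{x\ge0}(b^*_nx-f_n(x))$. $\|\cdot\|$ is the Euclidean norm. Bid Adjustment Algorithm: given stepsizes $\beta_k>0$, each generator picks $b_n(1)\ge c_n$. For each $k\ge1$: $q_n(k)=\arg\max_{q\ge0}(b_n(k)q-f_n(q))$; the operator selects an optimizer $(x^{\rm opt}(k),z^{\rm opt}(k))$ of S-DC-OPF with bids $b(k)$; and $b_n(k+1)=[\,b_n(k)+\beta_k(x^{\rm opt}_n(k)-q_n(k))\,]^+$, where $[u]^+=\max\{0,u\}$. *)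

theory Defs
  imports Complex_Main
begin

(* Buses are {1..Nb}, generators are {1..N}; edges E are pairs of buses;
   flows z and limits zbar are functions on pairs; G i is the generator set of bus i. *)

definition network_ok ::
  "nat \<Rightarrow> (nat \<times> nat) set \<Rightarrow> (nat \<times> nat \<Rightarrow> real) \<Rightarrow> (nat \<Rightarrow> nat set) \<Rightarrow> (nat \<Rightarrow> real)
   \<Rightarrow> nat \<Rightarrow> (nat \<Rightarrow> real) \<Rightarrow> (nat \<Rightarrow> real) \<Rightarrow> bool" where
  "network_ok Nb E zbar G y N a c \<longleftrightarrow>
     finite E \<and> E \<subseteq> {1..Nb} \<times> {1..Nb} \<and> (\<forall>e\<in>E. zbar e > 0) \<and>
     (\<forall>i\<in>{1..Nb}. G i \<subseteq> {1..N}) \<and>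
     (\<forall>i\<in>{1..Nb}. \<forall>j\<in>{1..Nb}. i \<noteq> j \<longrightarrow> G i \<inter> G j = {}) \<and>
     (\<Union>i\<in>{1..Nb}. G i) = {1..N} \<and>
     (\<forall>i\<in>{1..Nb}. y i \<ge> 0) \<and>
     (\<forall>n\<in>{1..N}. a n > 0 \<and> c n \<ge> 0)"

definition gen_cost :: "(nat \<Rightarrow> real) \<Rightarrow> (nat \<Rightarrow> real) \<Rightarrow> nat \<Rightarrow> real \<Rightarrow> real" where
  "gen_cost a c n x = a n * x\<^sup>2 + c n * x"

definition opf_feasible ::
  "nat \<Rightarrow> (nat \<times> nat) set \<Rightarrow> (nat \<times> nat \<Rightarrow> real) \<Rightarrow> (nat \<Rightarrow> nat set) \<Rightarrow> (nat \<Rightarrow> real)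
   \<Rightarrow> nat \<Rightarrow> (nat \<Rightarrow> real) \<Rightarrow> (nat \<times> nat \<Rightarrow> real) \<Rightarrow> bool" where
  "opf_feasible Nb E zbar G y N x z \<longleftrightarrow>
     (\<forall>i\<in>{1..Nb}. (\<Sum>j\<in>{j. (i, j) \<in> E}. z (i, j)) - (\<Sum>j\<in>{j. (j, i) \<in> E}. z (j, i))
                    = (\<Sum>n\<in>G i. x n) - y i) \<and>
     (\<forall>e\<in>E. \<bar>z e\<bar> \<le> zbar e) \<and>
     (\<forall>n\<in>{1..N}. x n \<ge> 0)"

definition dcopf_opt ::
  "nat \<Rightarrow> (nat \<times> nat) set \<Rightarrow> (nat \<times> nat \<Rightarrow> real) \<Rightarrow> (nat \<Rightarrow> nat set) \<Rightarrow> (nat \<Rightarrow> real)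
   \<Rightarrow> nat \<Rightarrow> (nat \<Rightarrow> real) \<Rightarrow> (nat \<Rightarrow> real) \<Rightarrow> (nat \<Rightarrow> real) \<Rightarrow> (nat \<times> nat \<Rightarrow> real) \<Rightarrow> bool" where
  "dcopf_opt Nb E zbar G y N a c x z \<longleftrightarrow>
     opf_feasible Nb E zbar G y N x z \<and>
     (\<forall>x' z'. opf_feasible Nb E zbar G y N x' z' \<longrightarrow>
        (\<Sum>n\<in>{1..N}. gen_cost a c n (x n)) \<le> (\<Sum>n\<in>{1..N}. gen_cost a c n (x' n)))"

definition sdcopf_opt ::
  "nat \<Rightarrow> (nat \<times> nat) set \<Rightarrow> (nat \<times> nat \<Rightarrow> real) \<Rightarrow> (nat \<Rightarrow> nat set) \<Rightarrow> (nat \<Rightarrow> real)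
   \<Rightarrow> nat \<Rightarrow> (nat \<Rightarrow> real) \<Rightarrow> (nat \<Rightarrow> real) \<Rightarrow> (nat \<times> nat \<Rightarrow> real) \<Rightarrow> bool" where
  "sdcopf_opt Nb E zbar G y N b x z \<longleftrightarrow>
     opf_feasible Nb E zbar G y N x z \<and>
     (\<forall>x' z'. opf_feasible Nb E zbar G y N x' z' \<longrightarrow>
        (\<Sum>n\<in>{1..N}. b n * x n) \<le> (\<Sum>n\<in>{1..N}. b n * x' n))"

definition best_response :: "(nat \<Rightarrow> real) \<Rightarrow> (nat \<Rightarrow> real) \<Rightarrow> nat \<Rightarrow> real \<Rightarrow> real" where
  "best_response a c n bid = arg_max (\<lambda>q. bid * q - gen_cost a c n q) (\<lambda>q. q \<ge> 0)"

(* An execution of the Bid Adjustment Algorithm: b k n = b_n(k), xo k, zo k = operator's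
   selected S-DC-OPF optimizer at iteration k (k >= 1). *)
definition bid_adjust_exec ::
  "nat \<Rightarrow> (nat \<times> nat) set \<Rightarrow> (nat \<times> nat \<Rightarrow> real) \<Rightarrow> (nat \<Rightarrow> nat set) \<Rightarrow> (nat \<Rightarrow> real)
   \<Rightarrow> nat \<Rightarrow> (nat \<Rightarrow> real) \<Rightarrow> (nat \<Rightarrow> real) \<Rightarrow> (nat \<Rightarrow> real)
   \<Rightarrow> (nat \<Rightarrow> nat \<Rightarrow> real) \<Rightarrow> (nat \<Rightarrow> nat \<Rightarrow> real) \<Rightarrow> (nat \<Rightarrow> nat \<times> nat \<Rightarrow> real) \<Rightarrow> bool" where
  "bid_adjust_exec Nb E zbar G y N a c beta b xo zo \<longleftrightarrow>
     (\<forall>k\<ge>1. beta k > 0) \<and>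
     (\<forall>n\<in>{1..N}. b 1 n \<ge> c n) \<and>
     (\<forall>k\<ge>1. sdcopf_opt Nb E zbar G y N (b k) (xo k) (zo k) \<and>
        (\<forall>n\<in>{1..N}. b (Suc k) n =
            max 0 (b k n + beta k * (xo k n - best_response a c n (b k n)))))"

definition bid_dist :: "nat \<Rightarrow> (nat \<Rightarrow> real) \<Rightarrow> (nat \<Rightarrow> real) \<Rightarrow> real" where
  "bid_dist N b b' = sqrt (\<Sum>n\<in>{1..N}. (b n - b' n)\<^sup>2)"

definition step_bound :: "real \<Rightarrow> real \<Rightarrow> real \<Rightarrow> real \<Rightarrow> real" where
  "step_bound amax amin ybar r = (1 / (2 * amax)) * inverse (1 / (2 * amin\<^sup>2) + 16 * ybar\<^sup>2 / r\<^sup>2)"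

end

theory Submission
  imports Defs
begin


lemma net_E: "network_ok Nb E zbar G y N a c \<Longrightarrow> E \<subseteq> {1..Nb} \<times> {1..Nb}"
  unfolding network_ok_def by (elim conjE)
lemma net_G: "network_ok Nb E zbar G y N a c \<Longrightarrow> \<forall>i\<in>{1..Nb}. G i \<subseteq> {1..N}"
  unfolding network_ok_def by (elim conjE)
lemma net_dis: "network_ok Nb E zbar G y N a c \<Longrightarrow> \<forall>i\<in>{1..Nb}. \<forall>j\<in>{1..Nb}. i \<noteq> j \<longrightarrow> G i \<inter> G j = {}"
  unfolding network_ok_def by (elim conjE)
lemma net_U: "network_ok Nb E zbar G y N a c \<Longrightarrow> (\<Union>i\<in>{1..Nb}. G i) = {1..N}"
  unfolding network_ok_def by (elim conjE)
lemma net_ac: "network_ok Nb E zbar G y N a c \<Longrightarrow> \<forall>n\<in>{1..N}. a n > 0 \<and> c n \<ge> 0"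
  unfolding network_ok_def by (elim conjE)

lemma best_response_eq:
  assumes a: "a n > 0" and bc: "bid \<ge> c n"
  shows "best_response a c n bid = (bid - c n) / (2 * a n)"
proof -
  define f where "f = (\<lambda>q. bid * q - gen_cost a c n q)"
  define q0 where "q0 = (bid - c n) / (2 * a n)"
  have q0: "q0 \<ge> 0" using a bc by (simp add: q0_def)
  have rel: "bid = c n + 2 * a n * q0" using a by (simp add: q0_def)
  have key: "f q0 - f q = a n * (q - q0)^2" for q
    unfolding f_def gen_cost_def rel by (simp add: algebra_simps power2_eq_square)
  have am: "is_arg_max f (\<lambda>q. q \<ge> 0) q0"
    unfolding is_arg_max_def
  proof (intro conjI q0 notI)
    assume "\<exists>y. 0 \<le> y \<and> f q0 < f y"
    then obtain y where "f q0 < f y" by blast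
    moreover have "a n * (y - q0)^2 \<ge> 0" using a by simp
    ultimately show False using key[of y] by linarith
  qed
  have un: "x = q0" if "is_arg_max f (\<lambda>q. q \<ge> 0) x" for x
  proof -
    from that have "\<not> f x < f q0" using q0 unfolding is_arg_max_def by blast
    hence "a n * (x - q0)^2 \<le> 0" using key[of x] by linarith
    hence "(x - q0)^2 \<le> 0" using a by (simp add: mult_le_0_iff)
    thus ?thesis by simp
  qed
  have "arg_max f (\<lambda>q. q \<ge> 0) = q0"
    unfolding arg_max_def
  proof (rule some_equality)
    show "is_arg_max f (\<lambda>q. q \<ge> 0) q0" by (rule am)
  next
    fix x assume "is_arg_max f (\<lambda>q. q \<ge> 0) x"
    thus "x = q0" by (rule un)
  qed
  thus ?thesis unfolding best_response_def f_def q0_def .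
qed

lemma lin_aux:
  fixes O1 I1 X1 O2 I2 X2 yy t :: real
  assumes "O1 - I1 = X1 - yy" "O2 - I2 = X2 - yy"
  shows "O1 + t * (O2 - O1) - (I1 + t * (I2 - I1)) = X1 + t * (X2 - X1) - yy"
proof -
  have "O1 + t * (O2 - O1) - (I1 + t * (I2 - I1)) = (O1 - I1) + t * ((O2 - I2) - (O1 - I1))"
    by (simp add: algebra_simps)
  also have "\<dots> = X1 + t * (X2 - X1) - yy" unfolding assms by (simp add: algebra_simps)
  finally show ?thesis .
qed

lemma feas_comb:
  assumes f1: "opf_feasible Nb E zbar G y N x z" and f2: "opf_feasible Nb E zbar G y N x' z'"
    and t0: "0 \<le> t" and t1: "t \<le> 1"
  shows "opf_feasible Nb E zbar G y N (\<lambda>n. x n + t * (x' n - x n)) (\<lambda>e. z e + t * (z' e - z e))"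
  unfolding opf_feasible_def
proof (intro conjI ballI)
  fix i assume i: "i \<in> {1..Nb}"
  have e1: "(\<Sum>j\<in>{j. (i, j) \<in> E}. z (i, j)) - (\<Sum>j\<in>{j. (j, i) \<in> E}. z (j, i)) = (\<Sum>n\<in>G i. x n) - y i"
    using f1 i unfolding opf_feasible_def by blast
  have e2: "(\<Sum>j\<in>{j. (i, j) \<in> E}. z' (i, j)) - (\<Sum>j\<in>{j. (j, i) \<in> E}. z' (j, i)) = (\<Sum>n\<in>G i. x' n) - y i"
    using f2 i unfolding opf_feasible_def by blast
  have s1: "(\<Sum>j\<in>{j. (i, j) \<in> E}. z (i, j) + t * (z' (i, j) - z (i, j)))
      = (\<Sum>j\<in>{j. (i, j) \<in> E}. z (i, j)) + t * ((\<Sum>j\<in>{j. (i, j) \<in> E}. z' (i, j)) - (\<Sum>j\<in>{j. (i, j) \<in> E}. z (i, j)))"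
    by (simp add: sum.distrib sum_distrib_left sum_subtractf algebra_simps)
  have s2: "(\<Sum>j\<in>{j. (j, i) \<in> E}. z (j, i) + t * (z' (j, i) - z (j, i)))
      = (\<Sum>j\<in>{j. (j, i) \<in> E}. z (j, i)) + t * ((\<Sum>j\<in>{j. (j, i) \<in> E}. z' (j, i)) - (\<Sum>j\<in>{j. (j, i) \<in> E}. z (j, i)))"
    by (simp add: sum.distrib sum_distrib_left sum_subtractf algebra_simps)
  have s3: "(\<Sum>n\<in>G i. x n + t * (x' n - x n)) = (\<Sum>n\<in>G i. x n) + t * ((\<Sum>n\<in>G i. x' n) - (\<Sum>n\<in>G i. x n))"
    by (simp add: sum.distrib sum_distrib_left sum_subtractf algebra_simps)
  show "(\<Sum>j\<in>{j. (i, j) \<in> E}. z (i, j) + t * (z' (i, j) - z (i, j))) -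
        (\<Sum>j\<in>{j. (j, i) \<in> E}. z (j, i) + t * (z' (j, i) - z (j, i))) =
        (\<Sum>n\<in>G i. x n + t * (x' n - x n)) - y i"
    unfolding s1 s2 s3 by (rule lin_aux[OF e1 e2])
next
  fix e assume e: "e \<in> E"
  have "\<bar>z e\<bar> \<le> zbar e" "\<bar>z' e\<bar> \<le> zbar e" using f1 f2 e unfolding opf_feasible_def by auto
  have eq: "z e + t * (z' e - z e) = (1 - t) * z e + t * z' e" by (simp add: algebra_simps)
  have "\<bar>(1 - t) * z e + t * z' e\<bar> \<le> \<bar>(1 - t) * z e\<bar> + \<bar>t * z' e\<bar>" by (rule abs_triangle_ineq)
  also have "\<dots> = (1 - t) * \<bar>z e\<bar> + t * \<bar>z' e\<bar>" using t0 t1 by (simp add: abs_mult)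
  also have "\<dots> \<le> (1 - t) * zbar e + t * zbar e"
    using t0 t1 \<open>\<bar>z e\<bar> \<le> zbar e\<close> \<open>\<bar>z' e\<bar> \<le> zbar e\<close>
    by (intro add_mono mult_left_mono) auto
  finally show "\<bar>z e + t * (z' e - z e)\<bar> \<le> zbar e" unfolding eq by (simp add: algebra_simps)
next
  fix n assume n: "n \<in> {1..N}"
  have "x n \<ge> 0" "x' n \<ge> 0" using f1 f2 n unfolding opf_feasible_def by auto
  have eq: "x n + t * (x' n - x n) = (1 - t) * x n + t * x' n" by (simp add: algebra_simps)
  show "0 \<le> x n + t * (x' n - x n)" unfolding eq
    using t0 t1 \<open>x n \<ge> 0\<close> \<open>x' n \<ge> 0\<close> by simp
qed

lemma first_order:
  assumes net: "network_ok Nb E zbar G y N a c"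
    and opt: "dcopf_opt Nb E zbar G y N a c xs zs"
    and feas: "opf_feasible Nb E zbar G y N x' z'"
    and bs_def: "\<forall>n\<in>{1..N}. bs n = 2 * a n * xs n + c n"
  shows "(\<Sum>n\<in>{1..N}. bs n * xs n) \<le> (\<Sum>n\<in>{1..N}. bs n * x' n)"
proof (rule ccontr)
  let ?I = "{1..N::nat}"
  define d where "d n = x' n - xs n" for n
  define g where "g = (\<Sum>n\<in>?I. bs n * d n)"
  define A where "A = (\<Sum>n\<in>?I. a n * (d n)^2)"
  assume "\<not> ?thesis"
  hence g: "g < 0" unfolding g_def d_def by (simp add: algebra_simps sum_subtractf)
  have ap: "\<forall>n\<in>?I. a n > 0" using net_ac[OF net] by blast
  have A: "A \<ge> 0" unfolding A_def using ap
    by (intro sum_nonneg) (simp add: less_imp_le)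
  define m where "m = - g"
  have m: "m > 0" using g by (simp add: m_def)
  define t where "t = m / (m + 2 * A + 1)"
  have t0: "t > 0" using m A by (simp add: t_def)
  have t1: "t \<le> 1" using m A by (simp add: t_def)
  have tA: "t * A < m"
  proof -
    have "A / (m + 2 * A + 1) < 1" using m A by simp
    hence "m * (A / (m + 2 * A + 1)) < m * 1" using m by (intro mult_strict_left_mono) auto
    thus ?thesis by (simp add: t_def)
  qed
  have fe: "opf_feasible Nb E zbar G y N (\<lambda>n. xs n + t * (x' n - xs n)) (\<lambda>e. zs e + t * (z' e - zs e))"
    using feas_comb[OF _ feas, of xs zs t] opt t0 t1 unfolding dcopf_opt_def by auto
  have le: "(\<Sum>n\<in>?I. gen_cost a c n (xs n)) \<le> (\<Sum>n\<in>?I. gen_cost a c n (xs n + t * (x' n - xs n)))"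
    using opt fe unfolding dcopf_opt_def by blast
  have pt: "gen_cost a c n (xs n + t * (x' n - xs n)) = gen_cost a c n (xs n) + t * (bs n * d n) + t^2 * (a n * (d n)^2)"
    if "n \<in> ?I" for n
    using bs_def that unfolding gen_cost_def d_def by (simp add: algebra_simps power2_eq_square)
  have "(\<Sum>n\<in>?I. gen_cost a c n (xs n + t * (x' n - xs n))) = (\<Sum>n\<in>?I. gen_cost a c n (xs n)) + t * g + t^2 * A"
    unfolding g_def A_def by (simp add: pt sum.distrib sum_distrib_left)
  with le have "0 \<le> t * g + t^2 * A" by simp
  also have "t * g + t^2 * A = t * (g + t * A)" by (simp add: algebra_simps power2_eq_square)
  finally have "0 \<le> g + t * A" using t0 by (simp add: zero_le_mult_iff)
  with tA show False by (simp add: m_def)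
qed

lemma total_gen:
  assumes net: "network_ok Nb E zbar G y N a c"
    and feas: "opf_feasible Nb E zbar G y N x z"
  shows "(\<Sum>n\<in>{1..N}. x n) = (\<Sum>i\<in>{1..Nb}. y i)"
proof -
  let ?B = "{1..Nb}"
  define g where "g p = (if p \<in> E then z p else 0)" for p
  have EB: "E \<subseteq> ?B \<times> ?B" using net by (rule net_E)
  have out: "(\<Sum>j\<in>{j. (i, j) \<in> E}. z (i, j)) = (\<Sum>j\<in>?B. g (i, j))" if "i \<in> ?B" for i
  proof -
    have eq: "{j. (i, j) \<in> E} = {j \<in> ?B. (i, j) \<in> E}" using EB by blast
    have "(\<Sum>j\<in>{j \<in> ?B. (i, j) \<in> E}. z (i, j)) = (\<Sum>j\<in>?B. if (i, j) \<in> E then z (i, j) else 0)"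
      by (rule sum.inter_filter) simp
    thus ?thesis unfolding g_def eq by simp
  qed
  have inn: "(\<Sum>j\<in>{j. (j, i) \<in> E}. z (j, i)) = (\<Sum>j\<in>?B. g (j, i))" if "i \<in> ?B" for i
  proof -
    have eq: "{j. (j, i) \<in> E} = {j \<in> ?B. (j, i) \<in> E}" using EB by blast
    have "(\<Sum>j\<in>{j \<in> ?B. (j, i) \<in> E}. z (j, i)) = (\<Sum>j\<in>?B. if (j, i) \<in> E then z (j, i) else 0)"
      by (rule sum.inter_filter) simp
    thus ?thesis unfolding g_def eq by simp
  qed
  have sw: "(\<Sum>i\<in>?B. \<Sum>j\<in>?B. g (j, i)) = (\<Sum>i\<in>?B. \<Sum>j\<in>?B. g (i, j))"
    by (rule sum.swap)
  have bal: "(\<Sum>i\<in>?B. (\<Sum>n\<in>G i. x n) - y i) = (\<Sum>i\<in>?B. (\<Sum>j\<in>?B. g (i, j)) - (\<Sum>j\<in>?B. g (j, i)))"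
  proof (rule sum.cong[OF refl])
    fix i assume i: "i \<in> ?B"
    have "(\<Sum>j\<in>{j. (i, j) \<in> E}. z (i, j)) - (\<Sum>j\<in>{j. (j, i) \<in> E}. z (j, i)) = (\<Sum>n\<in>G i. x n) - y i"
      using feas i unfolding opf_feasible_def by blast
    thus "(\<Sum>n\<in>G i. x n) - y i = (\<Sum>j\<in>?B. g (i, j)) - (\<Sum>j\<in>?B. g (j, i))"
      using out[OF i] inn[OF i] by simp
  qed
  also have "\<dots> = (\<Sum>i\<in>?B. \<Sum>j\<in>?B. g (i, j)) - (\<Sum>i\<in>?B. \<Sum>j\<in>?B. g (j, i))"
    by (simp only: sum_subtractf)
  also have "\<dots> = 0" unfolding sw by simp
  finally have z0: "(\<Sum>i\<in>?B. \<Sum>n\<in>G i. x n) - (\<Sum>i\<in>?B. y i) = 0" by (simp add: sum_subtractf)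
  have fin: "\<forall>i\<in>?B. finite (G i)" using net_G[OF net] finite_subset[of _ "{1..N}"] by blast
  have dis: "\<forall>i\<in>?B. \<forall>j\<in>?B. i \<noteq> j \<longrightarrow> G i \<inter> G j = {}" using net by (rule net_dis)
  have U: "(\<Union>i\<in>?B. G i) = {1..N}" using net by (rule net_U)
  have "(\<Sum>n\<in>(\<Union>i\<in>?B. G i). x n) = (\<Sum>i\<in>?B. \<Sum>n\<in>G i. x n)"
    by (rule sum.UNION_disjoint[OF _ fin dis]) simp
  with U z0 show ?thesis by simp
qed

lemma sq_bound:
  fixes u v :: "nat \<Rightarrow> real"
  assumes fin: "finite I" and nn: "\<forall>n\<in>I. u n \<ge> 0 \<and> v n \<ge> 0"
    and su: "(\<Sum>n\<in>I. u n) = Y0" and sv: "(\<Sum>n\<in>I. v n) = Y0"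
  shows "(\<Sum>n\<in>I. (u n - v n)^2) \<le> 2 * Y0^2"
proof -
  have a: "(\<Sum>n\<in>I. (w n)^2) \<le> Y0^2" if "\<forall>n\<in>I. w n \<ge> 0" "(\<Sum>n\<in>I. w n) = Y0" for w :: "nat \<Rightarrow> real"
  proof -
    have "(\<Sum>n\<in>I. (w n)^2) \<le> (\<Sum>n\<in>I. w n * Y0)"
    proof (rule sum_mono)
      fix n assume n: "n \<in> I"
      have "w n \<le> Y0" using that member_le_sum[OF n _ fin, of w] by auto
      thus "(w n)^2 \<le> w n * Y0" using that n by (simp add: power2_eq_square mult_left_mono)
    qed
    also have "\<dots> = Y0^2" using that by (simp add: sum_distrib_right[symmetric] power2_eq_square)
    finally show ?thesis .
  qed
  have "(\<Sum>n\<in>I. (u n - v n)^2) \<le> (\<Sum>n\<in>I. (u n)^2 + (v n)^2)"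
  proof (rule sum_mono)
    fix n assume "n \<in> I"
    hence "u n * v n \<ge> 0" using nn by simp
    thus "(u n - v n)^2 \<le> (u n)^2 + (v n)^2" by (simp add: power2_diff)
  qed
  also have "\<dots> \<le> Y0^2 + Y0^2" using a[of u] a[of v] nn su sv by (simp add: sum.distrib)
  finally show ?thesis by simp
qed



lemma step_ineq:
  fixes a b b' bs c xo xs :: "nat \<Rightarrow> real" and \<beta> amin amax Y :: real
  assumes fin: "finite I" and ab: "\<forall>n\<in>I. 0 < amin \<and> amin \<le> a n \<and> a n \<le> amax"
    and bsd: "\<forall>n\<in>I. bs n = 2 * a n * xs n + c n"
    and bt: "\<beta> > 0"
    and cross: "(\<Sum>n\<in>I. (b n - bs n) * (xo n - xs n)) \<le> 0"
    and Yb: "(\<Sum>n\<in>I. (xo n - xs n)^2) \<le> Y"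
    and upd: "\<forall>n\<in>I. b' n = b n + \<beta> * (xo n - (b n - c n) / (2 * a n))"
  shows "(\<Sum>n\<in>I. (b' n - bs n)^2) \<le> (\<Sum>n\<in>I. (b n - bs n)^2)
          - \<beta> * (\<Sum>n\<in>I. (b n - bs n)^2) / amax
          + \<beta>^2 * (2 * Y + (\<Sum>n\<in>I. (b n - bs n)^2) / (2 * amin^2))"
proof -
  define e where "e n = b n - bs n" for n
  define w where "w n = xo n - xs n" for n
  define u where "u n = e n / (2 * a n)" for n
  define S where "S = (\<Sum>n\<in>I. (e n)^2)"
  have amax: "amax > 0" and amin: "amin > 0" if "n \<in> I" for n using ab that by force+
  have eq: "b' n - bs n = e n + \<beta> * (w n - u n)" if n: "n \<in> I" for n
  proof -
    have an: "a n > 0" using ab n by force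
    have h: "(b n - c n) / (2 * a n) = u n + xs n"
      using an bsd n unfolding u_def e_def by (simp add: field_simps)
    have "b' n = b n + \<beta> * (xo n - (b n - c n) / (2 * a n))" using upd n by blast
    also have "\<dots> = b n + \<beta> * (xo n - (u n + xs n))" by (simp only: h)
    finally show ?thesis unfolding e_def w_def by (simp add: algebra_simps)
  qed
  have "(\<Sum>n\<in>I. (b' n - bs n)^2) = (\<Sum>n\<in>I. (e n)^2 + 2 * \<beta> * (e n * w n) - 2 * \<beta> * (e n * u n) + \<beta>^2 * (w n - u n)^2)"
    by (rule sum.cong) (simp_all add: eq power2_eq_square algebra_simps)
  also have "\<dots> = S + 2 * \<beta> * (\<Sum>n\<in>I. e n * w n) - 2 * \<beta> * (\<Sum>n\<in>I. e n * u n) + \<beta>^2 * (\<Sum>n\<in>I. (w n - u n)^2)"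
    unfolding S_def by (simp add: sum.distrib sum_subtractf sum_distrib_left)
  finally have E1: "(\<Sum>n\<in>I. (b' n - bs n)^2) = S + 2 * \<beta> * (\<Sum>n\<in>I. e n * w n) - 2 * \<beta> * (\<Sum>n\<in>I. e n * u n) + \<beta>^2 * (\<Sum>n\<in>I. (w n - u n)^2)" .
  have c1: "(\<Sum>n\<in>I. e n * w n) \<le> 0" using cross unfolding e_def w_def .
  have c2: "S / (2 * amax) \<le> (\<Sum>n\<in>I. e n * u n)"
  proof -
    have "S / (2 * amax) = (\<Sum>n\<in>I. (e n)^2 / (2 * amax))" unfolding S_def by (simp add: sum_divide_distrib)
    also have "\<dots> \<le> (\<Sum>n\<in>I. e n * u n)"
    proof (rule sum_mono)
      fix n assume n: "n \<in> I"
      have an: "0 < a n" "a n \<le> amax" using ab n by force+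
      have "(e n)^2 / (2 * amax) \<le> (e n)^2 / (2 * a n)"
        using an by (intro divide_left_mono) auto
      thus "(e n)^2 / (2 * amax) \<le> e n * u n" unfolding u_def by (simp add: power2_eq_square)
    qed
    finally show ?thesis .
  qed
  have c3: "(\<Sum>n\<in>I. (w n - u n)^2) \<le> 2 * Y + S / (2 * amin^2)"
  proof -
    have "(\<Sum>n\<in>I. (w n - u n)^2) \<le> (\<Sum>n\<in>I. 2 * (w n)^2 + (e n)^2 / (2 * amin^2))"
    proof (rule sum_mono)
      fix n assume n: "n \<in> I"
      have an: "0 < amin" "amin \<le> a n" using ab n by force+
      have "(w n - u n)^2 \<le> 2 * (w n)^2 + 2 * (u n)^2"
        using sum_squares_ge_zero[of "w n + u n" 0] by (simp add: power2_eq_square algebra_simps)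
      moreover have "(u n)^2 = (e n)^2 / (4 * (a n)^2)" unfolding u_def by (simp add: power_divide power_mult_distrib)
      moreover have "(e n)^2 / (4 * (a n)^2) \<le> (e n)^2 / (4 * amin^2)"
        using an by (intro divide_left_mono mult_left_mono power_mono) auto
      ultimately show "(w n - u n)^2 \<le> 2 * (w n)^2 + (e n)^2 / (2 * amin^2)" by simp
    qed
    also have "\<dots> = 2 * (\<Sum>n\<in>I. (w n)^2) + S / (2 * amin^2)"
      unfolding S_def by (simp add: sum.distrib sum_distrib_left sum_divide_distrib)
    also have "\<dots> \<le> 2 * Y + S / (2 * amin^2)" using Yb unfolding w_def by simp
    finally show ?thesis .
  qed
  have "2 * \<beta> * (\<Sum>n\<in>I. e n * w n) \<le> 0" using c1 bt by (simp add: mult_nonneg_nonpos)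
  moreover have "2 * \<beta> * (S / (2 * amax)) \<le> 2 * \<beta> * (\<Sum>n\<in>I. e n * u n)" using c2 bt by (intro mult_left_mono) auto
  moreover have "\<beta>^2 * (\<Sum>n\<in>I. (w n - u n)^2) \<le> \<beta>^2 * (2 * Y + S / (2 * amin^2))"
    using c3 by (intro mult_left_mono) auto
  ultimately have "(\<Sum>n\<in>I. (b' n - bs n)^2) \<le> S - 2 * \<beta> * (S / (2 * amax)) + \<beta>^2 * (2 * Y + S / (2 * amin^2))"
    unfolding E1 by linarith
  also have "2 * \<beta> * (S / (2 * amax)) = \<beta> * S / amax" by simp
  finally show ?thesis unfolding S_def e_def .
qed

lemma arith_step:
  fixes \<beta> \<alpha> B amin amax yb r S S' :: real
  assumes bt: "\<beta> > 0" and al: "\<alpha> \<le> \<beta>" and bB: "\<beta> \<le> B"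
    and Bdef: "B = (1 / (2 * amax)) * inverse (1 / (2 * amin^2) + 16 * yb^2 / r^2)"
    and amin: "amin > 0" and amax: "amax > 0" and r: "r > 0" and S: "S \<ge> 0"
    and S': "S' \<le> S - \<beta> * S / amax + \<beta>^2 * (4 * yb^2 + S / (2 * amin^2))"
  shows "(S \<ge> r^2 \<longrightarrow> S' \<le> (1 - \<alpha> / (2 * amax)) * S) \<and> (S < r^2 \<longrightarrow> S' \<le> r^2 * (1 + B / (2 * amax)))"
proof -
  define K where "K = 1 / (2 * amin^2) + 16 * yb^2 / r^2"
  have K: "K > 0" unfolding K_def using amin r by (simp add: add_pos_nonneg)
  have BK: "B * K = 1 / (2 * amax)" unfolding Bdef K_def[symmetric] using K by simp
  have bK: "\<beta> * K \<le> 1 / (2 * amax)" using bB K BK by (metis mult_right_mono less_imp_le)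
  have r2: "r^2 > 0" using r by simp
  show ?thesis
  proof (intro conjI impI)
    assume Sr: "S \<ge> r^2"
    have "4 * yb^2 \<le> 16 * yb^2 * (S / r^2)"
    proof -
      have "1 \<le> S / r^2" using Sr r2 by simp
      hence "16 * yb^2 * 1 \<le> 16 * yb^2 * (S / r^2)" by (intro mult_left_mono) auto
      moreover have "4 * yb^2 \<le> 16 * yb^2 * 1" by simp
      ultimately show ?thesis by linarith
    qed
    hence "4 * yb^2 + S / (2 * amin^2) \<le> S * K" unfolding K_def by (simp add: algebra_simps)
    hence "\<beta>^2 * (4 * yb^2 + S / (2 * amin^2)) \<le> \<beta>^2 * (S * K)" by (intro mult_left_mono) auto
    also have "\<dots> = (\<beta> * S) * (\<beta> * K)" by (simp add: power2_eq_square)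
    also have "\<dots> \<le> (\<beta> * S) * (1 / (2 * amax))" using bK bt S by (intro mult_left_mono) auto
    finally have X: "\<beta>^2 * (4 * yb^2 + S / (2 * amin^2)) \<le> (\<beta> * S) * (1 / (2 * amax))" .
    have "S' \<le> S - \<beta> * S / amax + (\<beta> * S) * (1 / (2 * amax))" using S' X by linarith
    also have "\<dots> = S - \<beta> * S / (2 * amax)" using amax by (simp add: field_simps)
    also have "\<dots> \<le> S - \<alpha> * S / (2 * amax)"
      using al S amax by (simp add: divide_right_mono mult_right_mono)
    finally show "S' \<le> (1 - \<alpha> / (2 * amax)) * S" by (simp add: algebra_simps)
  next
    assume Sr: "S < r^2"
    have "S / (2 * amin^2) \<le> r^2 / (2 * amin^2)" using Sr amin by (simp add: divide_right_mono)
    moreover have "4 * yb^2 \<le> 16 * yb^2" by simp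
    moreover have "r^2 * K = r^2 / (2 * amin^2) + 16 * yb^2" using r2 unfolding K_def by (simp add: field_simps)
    ultimately have "4 * yb^2 + S / (2 * amin^2) \<le> r^2 * K" by linarith
    hence "\<beta>^2 * (4 * yb^2 + S / (2 * amin^2)) \<le> \<beta>^2 * (r^2 * K)" by (intro mult_left_mono) auto
    also have "\<dots> = (\<beta> * r^2) * (\<beta> * K)" by (simp add: power2_eq_square)
    also have "\<dots> \<le> (\<beta> * r^2) * (1 / (2 * amax))" using bK bt by (intro mult_left_mono) auto
    also have "\<dots> \<le> (B * r^2) * (1 / (2 * amax))" using bB amax by (intro mult_right_mono) auto
    finally have X: "\<beta>^2 * (4 * yb^2 + S / (2 * amin^2)) \<le> r^2 * (B / (2 * amax))" by (simp add: mult.commute)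
    have "\<beta> * S / amax \<ge> 0" using bt S amax by simp
    with S' X Sr show "S' \<le> r^2 * (1 + B / (2 * amax))" by (simp add: algebra_simps)
  qed
qed



theorem theorem4p5:
  fixes Nb N :: nat and E :: "(nat \<times> nat) set" and zbar :: "nat \<times> nat \<Rightarrow> real"
    and G :: "nat \<Rightarrow> nat set" and y a c xs bs beta :: "nat \<Rightarrow> real"
    and zs :: "nat \<times> nat \<Rightarrow> real"
    and b xo :: "nat \<Rightarrow> nat \<Rightarrow> real" and zo :: "nat \<Rightarrow> nat \<times> nat \<Rightarrow> real"
    and r alpha :: real
  assumes net: "network_ok Nb E zbar G y N a c"
    and opt: "dcopf_opt Nb E zbar G y N a c xs zs"
    and uniq: "\<And>x z. dcopf_opt Nb E zbar G y N a c x z \<Longrightarrow> \<forall>n\<in>{1..N}. x n = xs n"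
    and buses: "\<forall>i\<in>{1..Nb}. G i = {} \<or> card (G i) \<ge> 2"
    and xpos: "\<forall>n\<in>{1..N}. xs n > 0"
    and bs_def: "\<forall>n\<in>{1..N}. bs n = 2 * a n * xs n + c n"
    and exec: "bid_adjust_exec Nb E zbar G y N a c beta b xo zo"
    and beta_lt: "\<forall>k\<ge>1. \<forall>n\<in>{1..N}. 0 < beta k \<and> beta k < 2 * a n"
    and r_pos: "0 < r" and r_lt: "r < bid_dist N (b 1) bs"
    and alpha_pos: "alpha > 0"
    and beta_bounds: "\<forall>k\<ge>1. alpha \<le> beta k \<and>
        beta k \<le> step_bound (Max (a ` {1..N})) (Min (a ` {1..N})) (\<Sum>i\<in>{1..Nb}. y i) r"
  shows "\<exists>l\<ge>1. bid_dist N (b l) bs < r \<and>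
           (\<forall>k\<in>{1..l-1}. bid_dist N (b k) bs \<ge> r \<and>
              bid_dist N (b (Suc k)) bs
                \<le> (1 - alpha / (2 * Max (a ` {1..N}))) powr (real k / 2) * bid_dist N (b 1) bs) \<and>
           (\<forall>k\<ge>l. bid_dist N (b k) bs
              \<le> sqrt (1 + step_bound (Max (a ` {1..N})) (Min (a ` {1..N})) (\<Sum>i\<in>{1..Nb}. y i) r
                         / (2 * Max (a ` {1..N}))) * r)"
proof -
  let ?I = "{1..N::nat}"
  define amax where "amax = Max (a ` ?I)"
  define amin where "amin = Min (a ` ?I)"
  define yb where "yb = (\<Sum>i\<in>{1..Nb}. y i)"
  define B where "B = step_bound amax amin yb r"
  define \<rho> where "\<rho> = 1 - alpha / (2 * amax)"
  define S where "S k = (\<Sum>n\<in>?I. (b k n - bs n)^2)" for k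
  have dist: "bid_dist N (b k) bs = sqrt (S k)" for k unfolding bid_dist_def S_def ..
  have Snn: "S k \<ge> 0" for k unfolding S_def by (intro sum_nonneg) simp
  have Nge: "N \<ge> 1"
  proof (rule ccontr)
    assume "\<not> N \<ge> 1"
    hence "?I = {}" by simp
    hence "bid_dist N (b 1) bs = 0" unfolding bid_dist_def by simp
    with r_pos r_lt show False by simp
  qed
  have one: "1 \<in> ?I" using Nge by simp
  have fin: "finite ?I" by simp
  have apos: "\<forall>n\<in>?I. a n > 0" and cnn: "\<forall>n\<in>?I. c n \<ge> 0"
    using net_ac[OF net] by auto
  have amax_ge: "\<forall>n\<in>?I. a n \<le> amax" unfolding amax_def using fin by auto
  have amin_le: "\<forall>n\<in>?I. amin \<le> a n" unfolding amin_def using fin by auto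
  have "amin \<in> a ` ?I" unfolding amin_def using fin one by (intro Min_in) auto
  hence amin_pos: "amin > 0" using apos by auto
  have amax_pos: "amax > 0" using amin_pos amin_le amax_ge one by force
  have ab: "\<forall>n\<in>?I. 0 < amin \<and> amin \<le> a n \<and> a n \<le> amax" using amin_pos amin_le amax_ge by blast
  have ex_b1: "\<forall>n\<in>?I. b 1 n \<ge> c n" and ex_opt: "\<forall>k\<ge>1. sdcopf_opt Nb E zbar G y N (b k) (xo k) (zo k)"
    and ex_upd: "\<forall>k\<ge>1. \<forall>n\<in>?I. b (Suc k) n = max 0 (b k n + beta k * (xo k n - best_response a c n (b k n)))"
    using exec unfolding bid_adjust_exec_def by auto
  have xo_feas: "opf_feasible Nb E zbar G y N (xo k) (zo k)" if "k \<ge> 1" for k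
    using ex_opt that unfolding sdcopf_opt_def by blast
  have xo_nn: "xo k n \<ge> 0" if "k \<ge> 1" "n \<in> ?I" for k n
    using xo_feas[OF that(1)] that(2) unfolding opf_feasible_def by blast
  have xs_feas: "opf_feasible Nb E zbar G y N xs zs" using opt unfolding dcopf_opt_def by blast
  have xs_nn: "xs n \<ge> 0" if "n \<in> ?I" for n
    using xs_feas that unfolding opf_feasible_def by blast
  have vge: "c n \<le> b k n + beta k * (xo k n - (b k n - c n) / (2 * a n))"
    if k: "k \<ge> 1" and n: "n \<in> ?I" and bcn: "c n \<le> b k n" for k n
  proof -
    have an: "a n > 0" using apos n by blast
    have bl: "0 < beta k" "beta k < 2 * a n" using beta_lt k n by auto
    have q: "beta k / (2 * a n) \<le> 1" using bl an by simp
    have "beta k * ((b k n - c n) / (2 * a n)) = (beta k / (2 * a n)) * (b k n - c n)" by simp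
    also have "\<dots> \<le> 1 * (b k n - c n)" using q bcn by (intro mult_right_mono) auto
    finally have h: "beta k * ((b k n - c n) / (2 * a n)) \<le> b k n - c n" by simp
    have "beta k * xo k n \<ge> 0" using bl xo_nn[OF k n] by simp
    thus ?thesis using h by (simp add: right_diff_distrib)
  qed
  have bc: "\<forall>n\<in>?I. c n \<le> b k n" if "k \<ge> 1" for k
    using that
  proof (induction k)
    case 0 thus ?case by simp
  next
    case (Suc m)
    show ?case
    proof (cases "m = 0")
      case True thus ?thesis using ex_b1 by simp
    next
      case False
      hence m: "m \<ge> 1" by simp
      show ?thesis
      proof
        fix n assume n: "n \<in> ?I"
        have bcn: "c n \<le> b m n" using Suc.IH m n by blast
        have br: "best_response a c n (b m n) = (b m n - c n) / (2 * a n)"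
          using best_response_eq apos n bcn by blast
        have "b (Suc m) n = max 0 (b m n + beta m * (xo m n - (b m n - c n) / (2 * a n)))"
          using ex_upd m n br by simp
        thus "c n \<le> b (Suc m) n" using vge[OF m n bcn] by simp
      qed
    qed
  qed
  have upd: "\<forall>n\<in>?I. b (Suc k) n = b k n + beta k * (xo k n - (b k n - c n) / (2 * a n))"
    if k: "k \<ge> 1" for k
  proof
    fix n assume n: "n \<in> ?I"
    have bcn: "c n \<le> b k n" using bc k n by blast
    have br: "best_response a c n (b k n) = (b k n - c n) / (2 * a n)"
      using best_response_eq apos n bcn by blast
    have "0 \<le> b k n + beta k * (xo k n - (b k n - c n) / (2 * a n))"
      using vge[OF k n bcn] cnn n by force
    thus "b (Suc k) n = b k n + beta k * (xo k n - (b k n - c n) / (2 * a n))"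
      using ex_upd k n br by simp
  qed
  have cross: "(\<Sum>n\<in>?I. (b k n - bs n) * (xo k n - xs n)) \<le> 0" if k: "k \<ge> 1" for k
  proof -
    have s1: "(\<Sum>n\<in>?I. b k n * xo k n) \<le> (\<Sum>n\<in>?I. b k n * xs n)"
      using ex_opt k xs_feas unfolding sdcopf_opt_def by blast
    have s2: "(\<Sum>n\<in>?I. bs n * xs n) \<le> (\<Sum>n\<in>?I. bs n * xo k n)"
      by (rule first_order[OF net opt xo_feas[OF k] bs_def])
    have "(\<Sum>n\<in>?I. (b k n - bs n) * (xo k n - xs n))
        = (\<Sum>n\<in>?I. b k n * xo k n) - (\<Sum>n\<in>?I. b k n * xs n) - ((\<Sum>n\<in>?I. bs n * xo k n) - (\<Sum>n\<in>?I. bs n * xs n))"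
      unfolding sum_subtractf[symmetric] by (rule sum.cong) (auto simp: algebra_simps)
    thus ?thesis using s1 s2 by linarith
  qed
  have Yb: "(\<Sum>n\<in>?I. (xo k n - xs n)^2) \<le> 2 * yb^2" if k: "k \<ge> 1" for k
    using sq_bound[OF fin _ total_gen[OF net xo_feas[OF k]] total_gen[OF net xs_feas]]
      xo_nn[OF k] xs_nn unfolding yb_def by blast
  have Sstep: "S (Suc k) \<le> S k - beta k * S k / amax + (beta k)^2 * (4 * yb^2 + S k / (2 * amin^2))"
    if k: "k \<ge> 1" for k
  proof -
    have bk: "beta k > 0" using beta_lt k one by blast
    from step_ineq[OF fin ab bs_def bk cross[OF k] Yb[OF k] upd[OF k]]
    show ?thesis unfolding S_def by simp
  qed
  have AS: "(S k \<ge> r^2 \<longrightarrow> S (Suc k) \<le> \<rho> * S k) \<and> (S k < r^2 \<longrightarrow> S (Suc k) \<le> r^2 * (1 + B / (2 * amax)))"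
    if k: "k \<ge> 1" for k
  proof -
    have bk: "beta k > 0" using beta_lt k one by blast
    have bb: "alpha \<le> beta k" "beta k \<le> B" using beta_bounds k unfolding B_def amax_def amin_def yb_def by auto
    show ?thesis unfolding \<rho>_def
      by (rule arith_step[OF bk bb _ amin_pos amax_pos r_pos Snn Sstep[OF k]]) (simp add: B_def step_bound_def)
  qed
  have ASs: "S (Suc k) \<le> \<rho> * S k" if "k \<ge> 1" "S k \<ge> r^2" for k
    using AS[OF that(1)] that(2) by blast
  have ASl: "S (Suc k) \<le> r^2 * (1 + B / (2 * amax))" if "k \<ge> 1" "S k < r^2" for k
    using AS[OF that(1)] that(2) by blast
  have alpha_lt: "alpha < 2 * amax"
  proof -
    have "alpha \<le> beta 1" "beta 1 < 2 * a 1" using beta_bounds beta_lt one by auto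
    thus ?thesis using amax_ge one by force
  qed
  have rho0: "0 < \<rho>" unfolding \<rho>_def using alpha_lt amax_pos by simp
  have rho1: "\<rho> < 1" unfolding \<rho>_def using alpha_pos amax_pos by simp
  have Bpos: "B > 0"
  proof -
    have "alpha \<le> beta 1" "beta 1 \<le> B" using beta_bounds unfolding B_def amax_def amin_def yb_def by auto
    thus ?thesis using alpha_pos by linarith
  qed
  have rr: "sqrt (r^2) = r" using r_pos by simp
  have sq_lt: "sqrt s < r \<longleftrightarrow> s < r^2" for s
    using real_sqrt_less_iff[of s "r^2"] unfolding rr .
  have S1: "S 1 > r^2"
  proof -
    have "sqrt (r^2) < sqrt (S 1)" using r_lt unfolding rr dist .
    thus ?thesis by (simp only: real_sqrt_less_iff)
  qed
  have exl: "\<exists>k. 1 \<le> k \<and> S k < r^2"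
  proof (rule ccontr)
    assume "\<not> ?thesis"
    hence all: "\<forall>k\<ge>1. S k \<ge> r^2" by (simp add: not_less)
    have dec: "S (Suc k) \<le> \<rho>^k * S 1" for k
    proof (induction k)
      case 0 thus ?case by simp
    next
      case (Suc m)
      have "S (Suc m) \<ge> r^2" using all by simp
      hence "S (Suc (Suc m)) \<le> \<rho> * S (Suc m)" by (intro ASs) simp_all
      also have "\<dots> \<le> \<rho> * (\<rho>^m * S 1)" using Suc.IH rho0 by (intro mult_left_mono) auto
      finally show ?case by simp
    qed
    have r2p: "r^2 > 0" using r_pos by simp
    hence S1p: "S 1 > 0" using S1 by linarith
    have "r^2 / S 1 > 0" using r2p S1p by (rule divide_pos_pos)
    then obtain n where "\<rho>^n < r^2 / S 1" using real_arch_pow_inv rho1 by blast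
    hence "\<rho>^n * S 1 < r^2" using S1p by (simp add: pos_less_divide_eq)
    moreover have "S (Suc n) \<ge> r^2" using all by simp
    ultimately show False using dec[of n] by linarith
  qed
  define l where "l = (LEAST k. 1 \<le> k \<and> S k < r^2)"
  have l: "1 \<le> l" "S l < r^2" using LeastI_ex[OF exl] unfolding l_def by auto
  have before: "S k \<ge> r^2" if "1 \<le> k" "k < l" for k
  proof -
    have "\<not> (1 \<le> k \<and> S k < r^2)"
      using not_less_Least[of k "\<lambda>k. 1 \<le> k \<and> S k < r^2"] that(2) unfolding l_def by blast
    thus ?thesis using that(1) by simp
  qed
  have decay: "1 \<le> k \<longrightarrow> k < l \<longrightarrow> S (Suc k) \<le> \<rho>^k * S 1" for k
  proof (induction k)
    case 0 thus ?case by simp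
  next
    case (Suc m)
    show ?case
    proof (intro impI)
      assume h: "1 \<le> Suc m" "Suc m < l"
      show "S (Suc (Suc m)) \<le> \<rho>^(Suc m) * S 1"
      proof (cases "m = 0")
        case True
        have "S 1 \<ge> r^2" using before[of 1] h True by simp
        hence "S (Suc 1) \<le> \<rho> * S 1" by (intro ASs) simp_all
        thus ?thesis using True by simp
      next
        case False
        have "S (Suc m) \<ge> r^2" using before[of "Suc m"] h by simp
        hence "S (Suc (Suc m)) \<le> \<rho> * S (Suc m)" by (intro ASs) simp_all
        also have "\<dots> \<le> \<rho> * (\<rho>^m * S 1)" using Suc.IH False h rho0 by (intro mult_left_mono) auto
        finally show ?thesis by simp
      qed
    qed
  qed
  define M where "M = 1 + B / (2 * amax)"
  have M1: "M \<ge> 1" unfolding M_def using Bpos amax_pos by simp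
  have after0: "S (l + j) \<le> r^2 * M" for j
  proof (induction j)
    case 0
    have "r^2 * 1 \<le> r^2 * M" using M1 by (intro mult_left_mono) auto
    thus ?case using l(2) by simp
  next
    case (Suc j)
    have n1: "l + j \<ge> 1" using l(1) by simp
    show ?case
    proof (cases "S (l + j) < r^2")
      case True
      hence "S (Suc (l + j)) \<le> r^2 * M" using ASl[OF n1] unfolding M_def by simp
      thus ?thesis by simp
    next
      case False
      hence "S (Suc (l + j)) \<le> \<rho> * S (l + j)" using ASs[OF n1] by simp
      also have "\<dots> \<le> S (l + j)" using mult_right_mono[of \<rho> 1 "S (l + j)"] rho1 Snn[of "l + j"] by simp
      finally show ?thesis using Suc.IH by simp
    qed
  qed
  have after: "S k \<le> r^2 * M" if "l \<le> k" for k
    using after0[of "k - l"] that by simp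
  have main: "\<exists>l\<ge>1. bid_dist N (b l) bs < r \<and>
           (\<forall>k\<in>{1..l-1}. bid_dist N (b k) bs \<ge> r \<and>
              bid_dist N (b (Suc k)) bs \<le> \<rho> powr (real k / 2) * bid_dist N (b 1) bs) \<and>
           (\<forall>k\<ge>l. bid_dist N (b k) bs \<le> sqrt M * r)"
  proof (rule exI[of _ l], intro conjI)
    show "1 \<le> l" by (rule l(1))
    show "bid_dist N (b l) bs < r" unfolding dist using sq_lt l(2) by blast
    show "\<forall>k\<in>{1..l-1}. r \<le> bid_dist N (b k) bs \<and>
              bid_dist N (b (Suc k)) bs \<le> \<rho> powr (real k / 2) * bid_dist N (b 1) bs"
    proof
      fix k assume k: "k \<in> {1..l-1}"
      hence k1: "1 \<le> k" "k < l" using l by auto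
      have Sk: "S k \<ge> r^2" by (rule before[OF k1])
      have A: "r \<le> bid_dist N (b k) bs" unfolding dist using sq_lt[of "S k"] Sk by linarith
      have "S (Suc k) \<le> \<rho>^k * S 1" using decay[of k] k1 by blast
      hence "sqrt (S (Suc k)) \<le> sqrt (\<rho>^k * S 1)" by (rule real_sqrt_le_mono)
      also have "\<dots> = sqrt (\<rho>^k) * sqrt (S 1)" by (rule real_sqrt_mult)
      also have "sqrt (\<rho>^k) * sqrt (S 1) = \<rho> powr (real k / 2) * sqrt (S 1)"
      proof -
        have "\<rho> powr (real k / 2) = sqrt (\<rho> powr real k)"
          by (rule powr_half_sqrt_powr) (use rho0 in linarith)
        also have "\<rho> powr real k = \<rho>^k" by (rule powr_realpow[OF rho0])
        finally show ?thesis by simp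
      qed
      finally have B: "bid_dist N (b (Suc k)) bs \<le> \<rho> powr (real k / 2) * bid_dist N (b 1) bs"
        unfolding dist .
      show "r \<le> bid_dist N (b k) bs \<and>
              bid_dist N (b (Suc k)) bs \<le> \<rho> powr (real k / 2) * bid_dist N (b 1) bs"
        using A B by blast
    qed
    show "\<forall>k\<ge>l. bid_dist N (b k) bs \<le> sqrt M * r"
    proof (intro allI impI)
      fix k assume "l \<le> k"
      hence "S k \<le> r^2 * M" by (rule after)
      hence "sqrt (S k) \<le> sqrt (r^2 * M)" by (rule real_sqrt_le_mono)
      also have "\<dots> = sqrt (r^2) * sqrt M" by (rule real_sqrt_mult)
      also have "\<dots> = sqrt M * r" unfolding rr by (rule mult.commute)
      finally show "bid_dist N (b k) bs \<le> sqrt M * r" unfolding dist .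
    qed
  qed
  show ?thesis
    unfolding amax_def[symmetric] amin_def[symmetric] yb_def[symmetric] B_def[symmetric]
      M_def[symmetric] \<rho>_def[symmetric]
    by (rule main)
qed

end
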